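(* Let $\gamma:[0,1]\to\mathbb{R}$ be of class $C^3$ on $(0,1]$ and $C^2$ on $[0,1]$, with $\gamma(0)=\gamma'(0)=\gamma''(0)=0$, $\gamma''$ nonnegative and strictly increasing on $[0,1]$, and such that $b=\lim_{t\to0+}\gamma''(t)/(t\gamma'''(t))$ exists in $[0,\infty)$. Let $h(t)=t^2\gamma''(t)$ for $t\in[0,1]$. Then: (i) if $0\le s\le\gamma(1)$, then $s\le h(1)$ and $h^{-1}(s)\le\gamma^{-1}(s)$; (ii) if $0\le s\le h(1/3)$, then $s\le\gamma(1)$ and $\gamma^{-1}(s)\le 3h^{-1}(s)$.
   Context: $h^{-1}$ and $\gamma^{-1}$ denote the inverses of the increasing functions $h$ and $\gamma$ on $[0,1]$. *)

theory Defs
  imports Complex_Main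
begin

end

theory Submission
  imports Defs "HOL-Analysis.Analysis"
begin

lemma mvt01:
  fixes f f' :: "real \<Rightarrow> real"
  assumes d: "\<And>t. t \<in> {0..1} \<Longrightarrow> (f has_real_derivative f' t) (at t within {0..1})"
    and ab: "0 \<le> a" "a < b" "b \<le> 1"
  shows "\<exists>x. a < x \<and> x < b \<and> f b - f a = f' x * (b - a)"
proof -
  have "\<exists>x\<in>{a<..<b}. f b - f a = (*) (f' x) (b - a)"
  proof (rule mvt_simple[OF ab(2)])
    fix x assume "a \<le> x" "x \<le> b"
    then have "(f has_real_derivative f' x) (at x within {a..b})"
      using d[of x] ab by (auto intro: has_field_derivative_subset)
    then show "(f has_derivative (*) (f' x)) (at x within {a..b})"
      by (rule has_field_derivative_imp_has_derivative)
  qed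
  then show ?thesis by auto
qed

theorem lemma4p3:
  fixes \<gamma> g1 g2 g3 :: "real \<Rightarrow> real" and b :: real
  assumes d1: "\<And>t. t \<in> {0..1} \<Longrightarrow> (\<gamma> has_real_derivative g1 t) (at t within {0..1})"
    and d2: "\<And>t. t \<in> {0..1} \<Longrightarrow> (g1 has_real_derivative g2 t) (at t within {0..1})"
    and c2: "continuous_on {0..1} g2"
    and d3: "\<And>t. t \<in> {0<..1} \<Longrightarrow> (g2 has_real_derivative g3 t) (at t within {0<..1})"
    and c3: "continuous_on {0<..1} g3"
    and z0: "\<gamma> 0 = 0" and z1: "g1 0 = 0" and z2: "g2 0 = 0"
    and nonneg: "\<And>t. t \<in> {0..1} \<Longrightarrow> g2 t \<ge> 0"
    and mono: "strict_mono_on {0..1} g2"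
    and b_nonneg: "b \<ge> 0"
    and lim: "((\<lambda>t. g2 t / (t * g3 t)) \<longlongrightarrow> b) (at_right 0)"
  defines "h \<equiv> (\<lambda>t. t\<^sup>2 * g2 t)"
  shows "(\<forall>s. 0 \<le> s \<and> s \<le> \<gamma> 1 \<longrightarrow>
            s \<le> h 1 \<and> the_inv_into {0..1} h s \<le> the_inv_into {0..1} \<gamma> s)
       \<and> (\<forall>s. 0 \<le> s \<and> s \<le> h (1/3) \<longrightarrow>
            s \<le> \<gamma> 1 \<and> the_inv_into {0..1} \<gamma> s \<le> 3 * the_inv_into {0..1} h s)"
proof -
  have g2m: "g2 x < g2 y" if "0 \<le> x" "x < y" "y \<le> 1" for x y
    using mono that unfolding strict_mono_on_def by auto
  have g2le: "g2 x \<le> g2 y" if "0 \<le> x" "x \<le> y" "y \<le> 1" for x y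
    using g2m[of x y] that by (cases "x = y") auto
  have g2pos: "g2 x > 0" if "0 < x" "x \<le> 1" for x
    using g2m[of 0 x] that z2 by auto
  have g1le: "g1 y - g1 x \<le> g2 y * (y - x)" if xy: "0 \<le> x" "x \<le> y" "y \<le> 1" for x y
  proof (cases "x = y")
    case False
    then obtain z where z: "x < z" "z < y" "g1 y - g1 x = g2 z * (y - x)"
      using mvt01[OF d2, of x y] xy by auto
    have "g2 z \<le> g2 y" using g2le[of z y] z xy by auto
    then show ?thesis using z xy by (simp add: mult_right_mono)
  qed simp
  have g1ge: "g1 y - g1 x \<ge> g2 x * (y - x)" if xy: "0 \<le> x" "x \<le> y" "y \<le> 1" for x y
  proof (cases "x = y")
    case False
    then obtain z where z: "x < z" "z < y" "g1 y - g1 x = g2 z * (y - x)"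
      using mvt01[OF d2, of x y] xy by auto
    have "g2 x \<le> g2 z" using g2le[of x z] z xy by auto
    then show ?thesis using z xy by (simp add: mult_right_mono)
  qed simp
  have g1pos: "g1 y > 0" if yy: "0 < y" "y \<le> 1" for y
  proof -
    obtain z where z: "0 < z" "z < y" "g1 y - g1 0 = g2 z * (y - 0)"
      using mvt01[OF d2, of 0 y] yy by auto
    then show ?thesis using g2pos[of z] that z1 by auto
  qed
  have g1nn: "g1 y \<ge> 0" if "0 \<le> y" "y \<le> 1" for y
    using g1pos[of y] that z1 by (cases "y = 0") auto
  have g1mono: "g1 x \<le> g1 y" if "0 \<le> x" "x \<le> y" "y \<le> 1" for x y
    using g1ge[of x y] nonneg[of x] that by (smt (verit) atLeastAtMost_iff mult_nonneg_nonneg)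
  have gm: "\<gamma> x < \<gamma> y" if xy: "0 \<le> x" "x < y" "y \<le> 1" for x y
  proof -
    obtain z where z: "x < z" "z < y" "\<gamma> y - \<gamma> x = g1 z * (y - x)"
      using mvt01[OF d1, of x y] xy by auto
    have "g1 z * (y - x) > 0" using g1pos[of z] z xy by auto
    then show ?thesis using z by auto
  qed
  have gnn: "\<gamma> x \<ge> 0" if "0 \<le> x" "x \<le> 1" for x
    using gm[of 0 x] that z0 by (cases "x = 0") auto
  have hm: "h x < h y" if "0 \<le> x" "x < y" "y \<le> 1" for x y
  proof -
    have "x\<^sup>2 * g2 x \<le> y\<^sup>2 * g2 x"
      using that nonneg[of x] by (intro mult_right_mono power_mono) auto
    also have "\<dots> < y\<^sup>2 * g2 y" using g2m[of x y] that by auto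
    finally show ?thesis unfolding h_def .
  qed
  have hnn: "h x \<ge> 0" if "0 \<le> x" "x \<le> 1" for x
    using nonneg[of x] that unfolding h_def by auto
  have h0: "h 0 = 0" unfolding h_def by simp
  have injg: "inj_on \<gamma> {0..1}"
    by (metis (no_types, lifting) atLeastAtMost_iff gm inj_onI linorder_neqE_linordered_idom order_less_irrefl)
  have injh: "inj_on h {0..1}"
    by (metis (no_types, lifting) atLeastAtMost_iff hm inj_onI linorder_neqE_linordered_idom order_less_irrefl)
  have cg: "continuous_on {0..1} \<gamma>" using d1 by (rule DERIV_continuous_on)
  have ch: "continuous_on {0..1} h" unfolding h_def by (intro continuous_intros c2)
  have gh: "\<gamma> t \<le> h t" if tt: "0 \<le> t" "t \<le> 1" for t
  proof (cases "t = 0")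
    case True then show ?thesis using z0 h0 by simp
  next
    case False
    then obtain z where z: "0 < z" "z < t" "\<gamma> t - \<gamma> 0 = g1 z * (t - 0)"
      using mvt01[OF d1, of 0 t] tt by auto
    have "g1 z \<le> g1 t" using g1mono[of z t] z that by auto
    also have "\<dots> \<le> g2 t * t" using g1le[of 0 t] that z1 by auto
    finally have "g1 z * t \<le> g2 t * t * t" using that by (intro mult_right_mono) auto
    then show ?thesis using z z0 unfolding h_def by (simp add: power2_eq_square mult_ac)
  qed
  have hg: "h t \<le> \<gamma> (3 * t)" if tt: "0 \<le> t" "t \<le> 1/3" for t
  proof (cases "t = 0")
    case True then show ?thesis using z0 h0 by simp
  next
    case False
    then obtain z where z: "2*t < z" "z < 3*t" "\<gamma> (3*t) - \<gamma> (2*t) = g1 z * (3*t - 2*t)"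
      using mvt01[OF d1, of "2*t" "3*t"] tt by auto
    have "g2 t * t \<le> g2 t * (z - t)" using z that nonneg[of t] by (intro mult_left_mono) auto
    also have "\<dots> \<le> g1 z - g1 t" using g1ge[of t z] z that by auto
    also have "\<dots> \<le> g1 z" using g1nn[of t] that by auto
    finally have "g2 t * t \<le> g1 z" .
    then have "t * (g2 t * t) \<le> t * g1 z" using tt by (intro mult_left_mono) auto
    moreover have "\<gamma> (2*t) \<ge> 0" using gnn[of "2*t"] tt by auto
    moreover have "h t = t * (g2 t * t)" unfolding h_def by (simp add: power2_eq_square mult_ac)
    moreover have "\<gamma> (3*t) = \<gamma> (2*t) + t * g1 z" using z by (simp add: algebra_simps)
    ultimately show ?thesis by linarith
  qed
  have part1: "s \<le> h 1 \<and> the_inv_into {0..1} h s \<le> the_inv_into {0..1} \<gamma> s"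
    if s: "0 \<le> s" "s \<le> \<gamma> 1" for s
  proof -
    have sh: "s \<le> h 1" using gh[of 1] s by simp
    obtain u where u: "0 \<le> u" "u \<le> 1" "\<gamma> u = s"
      using IVT'[of \<gamma> 0 s 1] s z0 cg by auto
    obtain t where t: "0 \<le> t" "t \<le> 1" "h t = s"
      using IVT'[of h 0 s 1] s sh h0 ch by auto
    have iu: "the_inv_into {0..1} \<gamma> s = u" using the_inv_into_f_f[OF injg, of u] u by auto
    have it: "the_inv_into {0..1} h s = t" using the_inv_into_f_f[OF injh, of t] t by auto
    have "t \<le> u"
    proof (rule ccontr)
      assume "\<not> t \<le> u"
      then have "h u < h t" using hm[of u t] u t by auto
      moreover have "\<gamma> u \<le> h u" using gh u by auto
      ultimately show False using u t by auto
    qed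
    then show ?thesis using sh iu it by simp
  qed
  have part2: "s \<le> \<gamma> 1 \<and> the_inv_into {0..1} \<gamma> s \<le> 3 * the_inv_into {0..1} h s"
    if s: "0 \<le> s" "s \<le> h (1/3)" for s
  proof -
    have sg: "s \<le> \<gamma> 1" using hg[of "1/3"] s by simp
    obtain u where u: "0 \<le> u" "u \<le> 1" "\<gamma> u = s"
      using IVT'[of \<gamma> 0 s 1] s sg z0 cg by auto
    obtain t where t: "0 \<le> t" "t \<le> 1/3" "h t = s"
      using IVT'[of h 0 s "1/3"] s h0 continuous_on_subset[OF ch, of "{0..1/3}"] by auto
    have iu: "the_inv_into {0..1} \<gamma> s = u" using the_inv_into_f_f[OF injg, of u] u by auto
    have it: "the_inv_into {0..1} h s = t" using the_inv_into_f_f[OF injh, of t] t by auto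
    have "u \<le> 3 * t"
    proof (rule ccontr)
      assume "\<not> u \<le> 3 * t"
      then have "\<gamma> (3*t) < \<gamma> u" using gm[of "3*t" u] u t by auto
      moreover have "h t \<le> \<gamma> (3*t)" using hg t by auto
      ultimately show False using u t by auto
    qed
    then show ?thesis using sg iu it by simp
  qed
  show ?thesis using part1 part2 by blast
qed

end
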